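(* Let $F$ and $H$ be two CNF formulae built over two disjoint sets of variables, and let $x$ be a variable occurring in neither of them. If both $F$ and $H$ are unsatisfiable, then $x$ is an optimal backtracking branching variable for $F +_x H = (F \vee x) \cup (H \vee \neg x)$, i.e., $x$ is the root of some minimum-size backtracking search tree of $F +_x H$.
   Context: A CNF formula is a finite set of clauses (disjunctions of literals); the empty clause is unsatisfiable. For a formula $F$ and a literal $l$, $l \vee F = F \vee l = \{ l \vee \gamma \mid \gamma \in F\}$. For a partial truth assignment $I$ (a set of literals), $F|I$ is the formula obtained by deleting every clause containing a literal true under $I$ and deleting from the remaining clauses every literal false under $I$. $Var(F)$ is the set of variables of $F$. A binary tree is either the empty tree $()$ or a triple $(x~T_1~T_2)$ with a node labelled $x$, left subtree $T_1$ and right subtree $T_2$; its size is its number of nodes. A backtracking search tree (BST) of $F$ is: the empty tree if $F$ contains the empty clause; otherwise a tree $(x~T_1~T_2)$ where $x \in Var(F)$, $T_1$ is a BST of $F|\{\neg x\}$ and $T_2$ is a BST of $F|\{x\}$. An optimal BST is a BST of minimum size. *)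

theory Defs
  imports Main
begin

datatype 'v lit = Pos 'v | Neg 'v

fun neg :: "'v lit \<Rightarrow> 'v lit" where
  "neg (Pos v) = Neg v" | "neg (Neg v) = Pos v"

fun var_of :: "'v lit \<Rightarrow> 'v" where
  "var_of (Pos v) = v" | "var_of (Neg v) = v"

type_synonym 'v clause = "'v lit set"
type_synonym 'v cnf = "'v clause set"

definition is_cnf :: "'v cnf \<Rightarrow> bool" where
  "is_cnf F \<longleftrightarrow> finite F \<and> (\<forall>C\<in>F. finite C)"

definition vars :: "'v cnf \<Rightarrow> 'v set" where
  "vars F = (\<Union>C\<in>F. var_of ` C)"

fun lit_true :: "('v \<Rightarrow> bool) \<Rightarrow> 'v lit \<Rightarrow> bool" where
  "lit_true a (Pos v) = a v" | "lit_true a (Neg v) = (\<not> a v)"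

definition satisfiable :: "'v cnf \<Rightarrow> bool" where
  "satisfiable F \<longleftrightarrow> (\<exists>a. \<forall>C\<in>F. \<exists>l\<in>C. lit_true a l)"

definition or_lit :: "'v lit \<Rightarrow> 'v cnf \<Rightarrow> 'v cnf" where
  "or_lit l F = (\<lambda>C. insert l C) ` F"

definition restrict :: "'v cnf \<Rightarrow> 'v lit set \<Rightarrow> 'v cnf" where
  "restrict F I = (\<lambda>C. C - neg ` I) ` {C \<in> F. C \<inter> I = {}}"

definition plus_x :: "'v cnf \<Rightarrow> 'v \<Rightarrow> 'v cnf \<Rightarrow> 'v cnf" where
  "plus_x F x H = or_lit (Pos x) F \<union> or_lit (Neg x) H"

datatype 'v btree = Empty | Node 'v "'v btree" "'v btree"

fun tsize :: "'v btree \<Rightarrow> nat" where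
  "tsize Empty = 0" | "tsize (Node x l r) = Suc (tsize l + tsize r)"

inductive is_bst :: "'v cnf \<Rightarrow> 'v btree \<Rightarrow> bool" where
  empty: "{} \<in> F \<Longrightarrow> is_bst F Empty"
| node: "{} \<notin> F \<Longrightarrow> x \<in> vars F \<Longrightarrow> is_bst (restrict F {Neg x}) T1
          \<Longrightarrow> is_bst (restrict F {Pos x}) T2 \<Longrightarrow> is_bst F (Node x T1 T2)"

definition optimal_bst :: "'v cnf \<Rightarrow> 'v btree \<Rightarrow> bool" where
  "optimal_bst F T \<longleftrightarrow> is_bst F T \<and> (\<forall>T'. is_bst F T' \<longrightarrow> tsize T \<le> tsize T')"

end

theory Submission
  imports Defs
begin

lemma var_neg[simp]: "var_of (neg l) = var_of l"
  by (cases l) auto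

lemma neg_neg[simp]: "neg (neg l) = l"
  by (cases l) auto

lemma lit_eq_var: "var_of l = var_of l' \<Longrightarrow> l' = l \<or> l' = neg l"
  by (cases l; cases l') auto

lemma vars_restrict: "vars (restrict F {l}) \<subseteq> vars F - {var_of l}"
proof
  fix v assume "v \<in> vars (restrict F {l})"
  then obtain C m where C: "C \<in> F" "l \<notin> C" "m \<in> C" "m \<noteq> neg l" "v = var_of m"
    by (auto simp: vars_def restrict_def)
  have "m \<noteq> l" using C by auto
  hence "var_of m \<noteq> var_of l" using C lit_eq_var by metis
  thus "v \<in> vars F - {var_of l}" using C by (auto simp: vars_def)
qed

lemma restrict_Un: "restrict (A \<union> B) I = restrict A I \<union> restrict B I"
  unfolding restrict_def by blast

lemma restrict_or_lit:
  assumes "m \<noteq> l" "m \<noteq> neg l"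
  shows "restrict (or_lit m F) {l} = or_lit m (restrict F {l})"
proof -
  have "{C \<in> (\<lambda>C. insert m C) ` F. C \<inter> {l} = {}} = (\<lambda>C. insert m C) ` {C \<in> F. C \<inter> {l} = {}}"
    using assms(1) by blast
  hence "restrict (or_lit m F) {l} = (\<lambda>C. C - {neg l}) ` (\<lambda>C. insert m C) ` {C \<in> F. C \<inter> {l} = {}}"
    unfolding restrict_def or_lit_def by simp
  also have "\<dots> = (\<lambda>C. insert m C) ` (\<lambda>C. C - {neg l}) ` {C \<in> F. C \<inter> {l} = {}}"
    unfolding image_image using assms(2) by (intro image_cong) auto
  finally show ?thesis unfolding restrict_def or_lit_def by simp
qed

lemma restrict_id:
  assumes "\<And>C. C \<in> F \<Longrightarrow> l \<notin> C \<and> neg l \<notin> C"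
  shows "restrict F {l} = F"
proof -
  have "{C \<in> F. C \<inter> {l} = {}} = F" using assms by blast
  moreover have "\<And>C. C \<in> F \<Longrightarrow> C - neg ` {l} = C" using assms by auto
  ultimately show ?thesis unfolding restrict_def by simp
qed

lemma restrict_kill:
  assumes "\<And>C. C \<in> F \<Longrightarrow> l \<in> C"
  shows "restrict F {l} = {}"
  using assms unfolding restrict_def by blast

lemma novar:
  assumes "v \<notin> vars H" "D \<in> H" "var_of l = v"
  shows "l \<notin> D \<and> neg l \<notin> D"
  using assms unfolding vars_def by (metis UN_I imageI var_neg)

lemma restrict_F_side:
  assumes "var_of l \<noteq> x" "var_of l \<notin> vars H"
  shows "restrict (plus_x F x H) {l} = plus_x (restrict F {l}) x H"
proof -
  have xl: "Pos x \<noteq> l" "Neg x \<noteq> l" "Pos x \<noteq> neg l" "Neg x \<noteq> neg l"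
    using assms(1) by (metis var_of.simps var_neg)+
  have "restrict (or_lit (Neg x) H) {l} = or_lit (Neg x) H"
    apply (rule restrict_id)
    using novar[OF assms(2) _ refl] xl unfolding or_lit_def by fastforce
  thus ?thesis unfolding plus_x_def restrict_Un using restrict_or_lit xl by metis
qed

lemma restrict_H_side:
  assumes "var_of l \<noteq> x" "var_of l \<notin> vars F"
  shows "restrict (plus_x F x H) {l} = plus_x F x (restrict H {l})"
proof -
  have xl: "Pos x \<noteq> l" "Neg x \<noteq> l" "Pos x \<noteq> neg l" "Neg x \<noteq> neg l"
    using assms(1) by (metis var_of.simps var_neg)+
  have "restrict (or_lit (Pos x) F) {l} = or_lit (Pos x) F"
    apply (rule restrict_id)
    using novar[OF assms(2) _ refl] xl unfolding or_lit_def by fastforce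
  thus ?thesis unfolding plus_x_def restrict_Un using restrict_or_lit xl by metis
qed

lemma restrict_negx:
  assumes "x \<notin> vars F"
  shows "restrict (plus_x F x H) {Neg x} = F"
proof -
  have "restrict (or_lit (Neg x) H) {Neg x} = {}"
    by (rule restrict_kill) (auto simp: or_lit_def)
  moreover have "restrict (or_lit (Pos x) F) {Neg x} = F"
  proof -
    have "{C \<in> (\<lambda>C. insert (Pos x) C) ` F. C \<inter> {Neg x} = {}} = (\<lambda>C. insert (Pos x) C) ` F"
      using novar[OF assms] by fastforce
    moreover have "\<And>C. C \<in> F \<Longrightarrow> insert (Pos x) C - neg ` {Neg x} = C"
      using novar[OF assms, of _ "Pos x"] by auto
    ultimately have "restrict (or_lit (Pos x) F) {Neg x} = (\<lambda>C. insert (Pos x) C - neg ` {Neg x}) ` F"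
      unfolding restrict_def or_lit_def by (simp add: image_image)
    also have "\<dots> = (\<lambda>C. C) ` F"
      by (rule image_cong) (use novar[OF assms, where l="Pos x"] in auto)
    finally show ?thesis by simp
  qed
  ultimately show ?thesis unfolding plus_x_def restrict_Un by simp
qed

lemma restrict_posx:
  assumes "x \<notin> vars H"
  shows "restrict (plus_x F x H) {Pos x} = H"
proof -
  have "restrict (or_lit (Pos x) F) {Pos x} = {}"
    by (rule restrict_kill) (auto simp: or_lit_def)
  moreover have "restrict (or_lit (Neg x) H) {Pos x} = H"
  proof -
    have "{C \<in> (\<lambda>C. insert (Neg x) C) ` H. C \<inter> {Pos x} = {}} = (\<lambda>C. insert (Neg x) C) ` H"
      using novar[OF assms] by fastforce
    moreover have "\<And>C. C \<in> H \<Longrightarrow> insert (Neg x) C - neg ` {Pos x} = C"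
      using novar[OF assms, of _ "Neg x"] by auto
    ultimately have "restrict (or_lit (Neg x) H) {Pos x} = (\<lambda>C. insert (Neg x) C - neg ` {Pos x}) ` H"
      unfolding restrict_def or_lit_def by (simp add: image_image)
    also have "\<dots> = (\<lambda>C. C) ` H"
      by (rule image_cong) (use novar[OF assms, where l="Neg x"] in auto)
    finally show ?thesis by simp
  qed
  ultimately show ?thesis unfolding plus_x_def restrict_Un by simp
qed

lemma vars_plus: "vars (plus_x F x H) \<subseteq> insert x (vars F \<union> vars H)"
  unfolding vars_def plus_x_def or_lit_def by auto

lemma empty_notin_plus: "{} \<notin> plus_x F x H"
  unfolding plus_x_def or_lit_def by auto

lemma x_in_vars_plus: "F \<noteq> {} \<Longrightarrow> x \<in> vars (plus_x F x H)"
  unfolding vars_def plus_x_def or_lit_def by force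

lemma main:
  "is_bst G T \<Longrightarrow> G = plus_x F x H \<Longrightarrow> vars F \<inter> vars H = {} \<Longrightarrow> x \<notin> vars F \<Longrightarrow> x \<notin> vars H
   \<Longrightarrow> \<exists>TF TH. is_bst F TF \<and> is_bst H TH \<and> tsize TF + tsize TH + 1 \<le> tsize T"
proof (induction arbitrary: F H rule: is_bst.induct)
  case (empty G)
  have False using empty.hyps empty.prems(1) empty_notin_plus[of F x H] by simp
  thus ?case ..
next
  case (node G y T1 T2)
  have "y \<in> vars (plus_x F x H)" using node.hyps(2) node.prems(1) by simp
  hence "y \<in> insert x (vars F \<union> vars H)" by (rule subsetD[OF vars_plus])
  moreover {
    assume "y = x"
    have "restrict G {Neg y} = F" using \<open>y = x\<close> node.prems restrict_negx by simp
    moreover have "restrict G {Pos y} = H" using \<open>y = x\<close> node.prems restrict_posx by simp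
    ultimately have "is_bst F T1" "is_bst H T2" using node.hyps(3,4) by simp_all
    hence ?case by force
  }
  moreover {
    assume y: "y \<in> vars F" "y \<noteq> x"
    hence yH: "y \<notin> vars H" using node.prems(2) by blast
    have r1: "restrict G {Neg y} = plus_x (restrict F {Neg y}) x H"
      using restrict_F_side[of "Neg y" x H F] y yH node.prems(1) by simp
    have r2: "restrict G {Pos y} = plus_x (restrict F {Pos y}) x H"
      using restrict_F_side[of "Pos y" x H F] y yH node.prems(1) by simp
    have d1: "vars (restrict F {Neg y}) \<inter> vars H = {}" "x \<notin> vars (restrict F {Neg y})"
      using vars_restrict[of F "Neg y"] node.prems(2-4) by blast+
    have d2: "vars (restrict F {Pos y}) \<inter> vars H = {}" "x \<notin> vars (restrict F {Pos y})"
      using vars_restrict[of F "Pos y"] node.prems(2-4) by blast+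
    obtain TF1 TH1 where a: "is_bst (restrict F {Neg y}) TF1" "is_bst H TH1"
      "tsize TF1 + tsize TH1 + 1 \<le> tsize T1"
      using node.IH(1)[OF r1 d1(1) d1(2) node.prems(4)] by blast
    obtain TF2 TH2 where b: "is_bst (restrict F {Pos y}) TF2" "is_bst H TH2"
      "tsize TF2 + tsize TH2 + 1 \<le> tsize T2"
      using node.IH(2)[OF r2 d2(1) d2(2) node.prems(4)] by blast
    obtain TF where tf: "is_bst F TF" "tsize TF \<le> Suc (tsize TF1 + tsize TF2)"
    proof (cases "{} \<in> F")
      case True then show ?thesis using that[of Empty] is_bst.empty[OF True] by simp
    next
      case False
      have "is_bst F (Node y TF1 TF2)" by (rule is_bst.node) (use False a b y in simp_all)
      then show ?thesis using that[of "Node y TF1 TF2"] by simp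
    qed
    have ?case
      apply (rule exI[of _ TF], rule exI[of _ TH1])
      using tf a b by simp
  }
  moreover {
    assume y: "y \<in> vars H" "y \<noteq> x"
    hence yF: "y \<notin> vars F" using node.prems(2) by blast
    have r1: "restrict G {Neg y} = plus_x F x (restrict H {Neg y})"
      using restrict_H_side[of "Neg y" x F H] y yF node.prems(1) by simp
    have r2: "restrict G {Pos y} = plus_x F x (restrict H {Pos y})"
      using restrict_H_side[of "Pos y" x F H] y yF node.prems(1) by simp
    have d1: "vars F \<inter> vars (restrict H {Neg y}) = {}" "x \<notin> vars (restrict H {Neg y})"
      using vars_restrict[of H "Neg y"] node.prems(2-4) by blast+
    have d2: "vars F \<inter> vars (restrict H {Pos y}) = {}" "x \<notin> vars (restrict H {Pos y})"
      using vars_restrict[of H "Pos y"] node.prems(2-4) by blast+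
    obtain TF1 TH1 where a: "is_bst F TF1" "is_bst (restrict H {Neg y}) TH1"
      "tsize TF1 + tsize TH1 + 1 \<le> tsize T1"
      using node.IH(1)[OF r1 d1(1) node.prems(3) d1(2)] by blast
    obtain TF2 TH2 where b: "is_bst F TF2" "is_bst (restrict H {Pos y}) TH2"
      "tsize TF2 + tsize TH2 + 1 \<le> tsize T2"
      using node.IH(2)[OF r2 d2(1) node.prems(3) d2(2)] by blast
    obtain TH where th: "is_bst H TH" "tsize TH \<le> Suc (tsize TH1 + tsize TH2)"
    proof (cases "{} \<in> H")
      case True then show ?thesis using that[of Empty] is_bst.empty[OF True] by simp
    next
      case False
      have "is_bst H (Node y TH1 TH2)" by (rule is_bst.node) (use False a b y in simp_all)
      then show ?thesis using that[of "Node y TH1 TH2"] by simp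
    qed
    have ?case
      apply (rule exI[of _ TF1], rule exI[of _ TH])
      using th a b by simp
  }
  ultimately show ?case by blast
qed

lemma unsat_restrict:
  assumes "\<not> satisfiable F" shows "\<not> satisfiable (restrict F {l})"
proof
  assume "satisfiable (restrict F {l})"
  then obtain a where a: "\<forall>C\<in>restrict F {l}. \<exists>m\<in>C. lit_true a m"
    unfolding satisfiable_def by blast
  define a' where "a' = a(var_of l := (case l of Pos _ \<Rightarrow> True | Neg _ \<Rightarrow> False))"
  have al: "lit_true a' l" unfolding a'_def by (cases l) auto
  have "\<forall>C\<in>F. \<exists>m\<in>C. lit_true a' m"
  proof
    fix C assume C: "C \<in> F"
    show "\<exists>m\<in>C. lit_true a' m"
    proof (cases "l \<in> C")
      case True then show ?thesis using al by blast
    next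
      case False
      have "C - {neg l} \<in> restrict F {l}" unfolding restrict_def
        by (rule image_eqI[where x=C]) (use False C in auto)
      then obtain m where m: "m \<in> C" "m \<noteq> neg l" "lit_true a m" using a by blast
      have "m \<noteq> l" using False m by blast
      hence "var_of m \<noteq> var_of l" using m lit_eq_var by metis
      hence "lit_true a' m = lit_true a m" unfolding a'_def by (cases m) auto
      then show ?thesis using m by blast
    qed
  qed
  thus False using assms unfolding satisfiable_def by blast
qed

lemma exists_bst:
  "finite (vars F) \<Longrightarrow> \<not> satisfiable F \<Longrightarrow> \<exists>T. is_bst F T"
proof (induction "card (vars F)" arbitrary: F rule: less_induct)
  case less
  show ?case
  proof (cases "{} \<in> F")
    case True then show ?thesis using is_bst.empty by blast
  next
    case False
    have "F \<noteq> {}" using less.prems unfolding satisfiable_def by blast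
    then obtain C where C: "C \<in> F" "C \<noteq> {}" using False by blast
    then obtain m where "m \<in> C" by blast
    hence y: "var_of m \<in> vars F" using C unfolding vars_def by blast
    define y where "y = var_of m"
    have IH: "\<exists>T. is_bst (restrict F {l}) T" if "var_of l = y" for l
    proof (rule less.hyps)
      have sub: "vars (restrict F {l}) \<subseteq> vars F - {y}" using vars_restrict that by metis
      thus "finite (vars (restrict F {l}))" using less.prems finite_subset by blast
      have "vars (restrict F {l}) \<subset> vars F" using sub y y_def by blast
      thus "card (vars (restrict F {l})) < card (vars F)"
        using less.prems(1) psubset_card_mono by blast
      show "\<not> satisfiable (restrict F {l})" using unsat_restrict less.prems by blast
    qed
    obtain T1 T2 where t: "is_bst (restrict F {Neg y}) T1" "is_bst (restrict F {Pos y}) T2"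
      using IH[of "Neg y"] IH[of "Pos y"] by auto
    have "y \<in> vars F" using y unfolding y_def .
    hence "is_bst F (Node y T1 T2)" using False t by (intro is_bst.node)
    then show ?thesis ..
  qed
qed

lemma exists_opt:
  assumes "is_cnf F" "\<not> satisfiable F"
  shows "\<exists>T. optimal_bst F T"
proof -
  have "finite (vars F)" using assms(1) unfolding is_cnf_def vars_def by auto
  then obtain T where "is_bst F T" using exists_bst assms(2) by blast
  then show ?thesis unfolding optimal_bst_def using ex_has_least_nat[of "is_bst F" T tsize] by blast
qed

theorem lemma4:
  fixes F H :: "'v cnf" and x :: 'v
  assumes "is_cnf F" and "is_cnf H"
    and "vars F \<inter> vars H = {}"
    and "x \<notin> vars F" and "x \<notin> vars H"
    and "\<not> satisfiable F" and "\<not> satisfiable H"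
  shows "\<exists>T1 T2. optimal_bst (plus_x F x H) (Node x T1 T2)"
proof -
  obtain TF TH where f: "optimal_bst F TF" and h: "optimal_bst H TH"
    using exists_opt assms by metis
  have "F \<noteq> {}" using assms(6) unfolding satisfiable_def by blast
  hence bst: "is_bst (plus_x F x H) (Node x TF TH)"
    using is_bst.node[OF empty_notin_plus x_in_vars_plus] f h
      restrict_negx[OF assms(4)] restrict_posx[OF assms(5)]
    unfolding optimal_bst_def by metis
  have "tsize (Node x TF TH) \<le> tsize T'" if T': "is_bst (plus_x F x H) T'" for T'
  proof -
    obtain TF' TH' where "is_bst F TF'" "is_bst H TH'" "tsize TF' + tsize TH' + 1 \<le> tsize T'"
      using main[OF T' refl assms(3-5)] by blast
    thus ?thesis using f h unfolding optimal_bst_def by fastforce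
  qed
  thus ?thesis using bst unfolding optimal_bst_def by blast
qed

end
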